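(* Let $G$ be a graph and $(A,B)$ a $2$-separation of $G$ with $A\cap B=\{x,y\}$. Let $X=\{a,b,c,d\}\subseteq V(G)$. If $x,y\in X$, one vertex of $X$ lies in $A\setminus\{x,y\}$ and the other lies in $B\setminus\{x,y\}$, then $G$ does not have an $L(X)$-minor.
   Context: A $2$-separation is a pair $(A,B)$ with $A\cup B=V(G)$, $|A\cap B|\le2$ and no edge between $A\setminus B$ and $B\setminus A$. The graph $L$ has vertices $v_1,\dots,v_8$ and edges $v_1v_2,v_1v_5,v_2v_7,v_2v_8,v_2v_3,v_3v_4,v_4v_5,v_4v_7,v_5v_6,v_6v_7,v_6v_8,v_7v_8$. An $L$-model in $G$ is a family $\{G_z:z\in V(L)\}$ of pairwise vertex-disjoint connected subgraphs of $G$ such that for each $zz'\in E(L)$ some vertex of $G_z$ is adjacent to some vertex of $G_{z'}$. $G$ has an $L(X)$-minor if there is an $L$-model and an injective map $\pi:X\to\{v_1,v_3,v_4,v_5\}$ with $u\in V(G_{\pi(u)})$ for all $u\in X$. *)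

theory Defs
  imports Main
begin

definition graph :: "'a set \<Rightarrow> ('a \<times> 'a) set \<Rightarrow> bool" where
  "graph V E \<longleftrightarrow> finite V \<and> E \<subseteq> V \<times> V \<and> sym E \<and> (\<forall>v. (v, v) \<notin> E)"

definition two_separation :: "'a set \<Rightarrow> ('a \<times> 'a) set \<Rightarrow> 'a set \<Rightarrow> 'a set \<Rightarrow> bool" where
  "two_separation V E A B \<longleftrightarrow> A \<union> B = V \<and> card (A \<inter> B) \<le> 2 \<and>
     (\<forall>u v. u \<in> A - B \<longrightarrow> v \<in> B - A \<longrightarrow> (u, v) \<notin> E)"

definition connected_subgraph :: "'a set \<Rightarrow> ('a \<times> 'a) set \<Rightarrow> 'a set \<Rightarrow> ('a \<times> 'a) set \<Rightarrow> bool" where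
  "connected_subgraph V E W F \<longleftrightarrow> W \<subseteq> V \<and> F \<subseteq> E \<and> F \<subseteq> W \<times> W \<and> sym F \<and> W \<noteq> {} \<and>
     (\<forall>u\<in>W. \<forall>v\<in>W. (u, v) \<in> F\<^sup>*)"

text \<open>The graph L on vertices 1..8 (vertex i stands for v_i).\<close>
definition L_vertices :: "nat set" where "L_vertices = {1..8}"

definition L_edges :: "(nat \<times> nat) set" where
  "L_edges = {(1,2),(1,5),(2,7),(2,8),(2,3),(3,4),(4,5),(4,7),(5,6),(6,7),(6,8),(7,8)}"

definition L_model :: "'a set \<Rightarrow> ('a \<times> 'a) set \<Rightarrow> (nat \<Rightarrow> 'a set) \<Rightarrow> (nat \<Rightarrow> ('a \<times> 'a) set) \<Rightarrow> bool" where
  "L_model V E W F \<longleftrightarrow>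
     (\<forall>z\<in>L_vertices. connected_subgraph V E (W z) (F z)) \<and>
     (\<forall>z\<in>L_vertices. \<forall>z'\<in>L_vertices. z \<noteq> z' \<longrightarrow> W z \<inter> W z' = {}) \<and>
     (\<forall>(z, z')\<in>L_edges. \<exists>u\<in>W z. \<exists>v\<in>W z'. (u, v) \<in> E)"

definition has_L_minor_rooted :: "'a set \<Rightarrow> ('a \<times> 'a) set \<Rightarrow> 'a set \<Rightarrow> bool" where
  "has_L_minor_rooted V E X \<longleftrightarrow>
     (\<exists>W F \<pi>. L_model V E W F \<and> \<pi> ` X \<subseteq> {1, 3, 4, 5} \<and> inj_on \<pi> X \<and>
        (\<forall>u\<in>X. u \<in> W (\<pi> u)))"

end

theory Submission
  imports Defs
begin

lemma conn_side:
  assumes cs: "connected_subgraph V E S F" and AB: "A \<union> B = V"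
    and ne: "\<forall>u v. u \<in> A - B \<longrightarrow> v \<in> B - A \<longrightarrow> (u, v) \<notin> E"
    and dis: "S \<inter> (A \<inter> B) = {}" and u: "u \<in> S" "u \<in> A - B"
  shows "S \<subseteq> A - B"
proof
  fix v assume v: "v \<in> S"
  have F: "F \<subseteq> E" "F \<subseteq> S \<times> S" "S \<subseteq> V" using cs unfolding connected_subgraph_def by auto
  have "(u, v) \<in> F\<^sup>*" using cs u v unfolding connected_subgraph_def by auto
  then show "v \<in> A - B"
  proof (induction rule: rtrancl_induct)
    case base then show ?case using u by simp
  next
    case (step w z)
    have "z \<in> S" using step F by auto
    then have "z \<in> A - B \<or> z \<in> B - A" using F AB dis by auto
    then show ?case using step ne F by auto
  qed
qed

lemma conn_side2:
  assumes cs: "connected_subgraph V E S F" and AB: "A \<union> B = V"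
    and ne: "\<forall>u v. u \<in> A - B \<longrightarrow> v \<in> B - A \<longrightarrow> (u, v) \<notin> E"
    and sE: "sym E"
    and dis: "S \<inter> (A \<inter> B) = {}"
  shows "S \<subseteq> A - B \<or> S \<subseteq> B - A"
proof -
  have F: "S \<subseteq> V" "S \<noteq> {}" using cs unfolding connected_subgraph_def by auto
  then obtain u where u: "u \<in> S" by auto
  have ne': "\<forall>u v. u \<in> B - A \<longrightarrow> v \<in> A - B \<longrightarrow> (u, v) \<notin> E"
    using ne sE by (meson symD)
  have AB': "B \<union> A = V" using AB by auto
  have dis': "S \<inter> (B \<inter> A) = {}" using dis by auto
  have "u \<in> A - B \<or> u \<in> B - A" using u F AB dis by auto
  then show ?thesis
    using conn_side[OF cs AB ne dis u] conn_side[OF cs AB' ne' dis' u] by auto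
qed

lemma L_comb:
  fixes s :: "nat \<Rightarrow> bool"
  assumes "i \<in> {1,3,4,5}" "j \<in> {1,3,4,5}"
    and e: "\<And>z z'. (z, z') \<in> L_edges \<Longrightarrow> z \<notin> {i,j} \<Longrightarrow> z' \<notin> {i,j} \<Longrightarrow> s z = s z'"
    and t: "t \<in> {1,3,4,5}" "t \<notin> {i,j}"
  shows "s t = s 2"
proof -
  have c1: "s 2 = s 7" using e[of 2 7] assms(1,2) by (auto simp: L_edges_def)
  have c2: "s 7 = s 8" using e[of 7 8] assms(1,2) by (auto simp: L_edges_def)
  have c3: "s 6 = s 8" using e[of 6 8] assms(1,2) by (auto simp: L_edges_def)
  show ?thesis using t
  proof (elim insertE)
    assume "t = 1" then show ?thesis using e[of 1 2] t assms(1,2) by (auto simp: L_edges_def)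
  next
    assume "t = 3" then show ?thesis using e[of 2 3] t assms(1,2) by (auto simp: L_edges_def)
  next
    assume "t = 4" then show ?thesis using e[of 4 7] t assms(1,2) c1 by (auto simp: L_edges_def)
  next
    assume "t = 5" then show ?thesis using e[of 5 6] t assms(1,2) c1 c2 c3 by (auto simp: L_edges_def)
  qed auto
qed

theorem mainTheorem19:
  fixes V :: "'a set" and E :: "('a \<times> 'a) set" and A B :: "'a set"
    and x y a b c d :: 'a and X :: "'a set"
  assumes "graph V E"
    and "two_separation V E A B" and "A \<inter> B = {x, y}"
    and "X = {a, b, c, d}" and "distinct [a, b, c, d]" and "X \<subseteq> V"
    and "x \<in> X" and "y \<in> X"
    and "\<exists>p q. X - {x, y} = {p, q} \<and> p \<in> A - {x, y} \<and> q \<in> B - {x, y}"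
  shows "\<not> has_L_minor_rooted V E X"
proof
  assume "has_L_minor_rooted V E X"
  then obtain W F \<pi> where M: "L_model V E W F" and pi: "\<pi> ` X \<subseteq> {1, 3, 4, 5}" "inj_on \<pi> X"
    and r: "\<forall>u\<in>X. u \<in> W (\<pi> u)" unfolding has_L_minor_rooted_def by blast
  obtain p q where pq: "X - {x, y} = {p, q}" "p \<in> A - {x, y}" "q \<in> B - {x, y}" using assms(9) by blast
  have AB: "A \<union> B = V" and ne: "\<forall>u v. u \<in> A - B \<longrightarrow> v \<in> B - A \<longrightarrow> (u, v) \<notin> E"
    using assms(2) unfolding two_separation_def by auto
  have sE: "sym E" using assms(1) unfolding graph_def by auto
  have pX: "p \<in> X" "q \<in> X" "p \<notin> {x,y}" "q \<notin> {x,y}" using pq by auto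
  have pA: "p \<in> A - B" "q \<in> B - A" using pq assms(3) by auto
  then have pqne: "p \<noteq> q" by auto
  define i where "i = \<pi> x"
  define j where "j = \<pi> y"
  define k where "k = \<pi> p"
  define l where "l = \<pi> q"
  have ij: "i \<in> {1,3,4,5}" "j \<in> {1,3,4,5}" "k \<in> {1,3,4,5}" "l \<in> {1,3,4,5}"
    using pi(1) assms(7,8) pX unfolding i_def j_def k_def l_def by auto
  have kl: "k \<notin> {i,j}" "l \<notin> {i,j}" "k \<noteq> l"
    using pi(2) assms(7,8) pX pqne unfolding i_def j_def k_def l_def inj_on_def by blast+
  have Lv: "{1,3,4,5} \<subseteq> L_vertices" unfolding L_vertices_def by auto
  have cs: "\<And>z. z \<in> L_vertices \<Longrightarrow> connected_subgraph V E (W z) (F z)"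
    and dj: "\<And>z z'. z \<in> L_vertices \<Longrightarrow> z' \<in> L_vertices \<Longrightarrow> z \<noteq> z' \<Longrightarrow> W z \<inter> W z' = {}"
    and ed: "\<And>z z'. (z, z') \<in> L_edges \<Longrightarrow> \<exists>u\<in>W z. \<exists>v\<in>W z'. (u, v) \<in> E"
    using M unfolding L_model_def by auto
  have xi: "x \<in> W i" "y \<in> W j" using r assms(7,8) unfolding i_def j_def by auto
  have avoid: "W z \<inter> (A \<inter> B) = {}" if "z \<in> L_vertices" "z \<notin> {i,j}" for z
  proof -
    have "x \<notin> W z" using dj[of z i] that xi ij Lv by auto
    moreover have "y \<notin> W z" using dj[of z j] that xi ij Lv by auto
    ultimately show ?thesis using assms(3) by auto
  qed
  have side: "W z \<subseteq> A - B \<or> W z \<subseteq> B - A" if "z \<in> L_vertices" "z \<notin> {i,j}" for z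
    using conn_side2[OF cs[OF that(1)] AB ne sE avoid[OF that]] .
  have nonempty: "W z \<noteq> {}" if "z \<in> L_vertices" for z
    using cs[OF that] unfolding connected_subgraph_def by auto
  have Le: "z \<in> L_vertices \<and> z' \<in> L_vertices" if "(z, z') \<in> L_edges" for z z'
    using that unfolding L_edges_def L_vertices_def by auto
  define s where "s z = (W z \<subseteq> A - B)" for z
  have e: "s z = s z'" if zE: "(z, z') \<in> L_edges" "z \<notin> {i,j}" "z' \<notin> {i,j}" for z z'
  proof -
    obtain u v where uv: "u \<in> W z" "v \<in> W z'" "(u, v) \<in> E" using ed[OF zE(1)] by blast
    have zz: "z \<in> L_vertices" "z' \<in> L_vertices" using Le[OF that(1)] by auto
    have s1: "W z \<subseteq> A - B \<or> W z \<subseteq> B - A" using side zz that by auto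
    have s2: "W z' \<subseteq> A - B \<or> W z' \<subseteq> B - A" using side zz that by auto
    have vu: "(v, u) \<in> E" using uv(3) sE by (meson symD)
    show ?thesis unfolding s_def using s1 s2 uv vu ne by blast
  qed
  have sk: "s k = s 2" using L_comb[of i j s k] ij kl e by blast
  have sl: "s l = s 2" using L_comb[of i j s l] ij kl e by blast
  have Wk: "W k \<subseteq> A - B"
  proof -
    have kL: "k \<in> L_vertices" using Lv ij by auto
    moreover have "p \<in> W k" using r pX unfolding k_def by auto
    ultimately show ?thesis using side[of k] kl pA by blast
  qed
  have "W l \<subseteq> B - A"
  proof -
    have "l \<in> L_vertices" using Lv ij by auto
    moreover have "q \<in> W l" using r pX unfolding l_def by auto
    ultimately show ?thesis using side[of l] kl pA by blast
  qed
  moreover have "W l \<noteq> {}" using nonempty Lv ij by auto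
  ultimately have "\<not> s l" unfolding s_def by blast
  moreover have "s k" using Wk unfolding s_def by simp
  ultimately show False using sk sl by simp
qed

end
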